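(* Let $n, C_1, C_2$ be positive constants with $C_2 > 1$, and let $f:[0,+\infty)\to[0,+\infty)$ be a monotonically increasing nonnegative function satisfying $$f(r) \le C_1 r^n f\!\left(\tfrac{r}{2}\right) \quad \text{for all } r \in [C_2,+\infty).$$ Then there is a positive constant $C_3$, depending only on $n, C_1, C_2$ and $f(C_2)$, such that $$f(r) \le C_3\, e^{2n(\log r)^2} \quad \text{for all } r \in [C_2,+\infty).$$ *)

theory Defs
  imports Complex_Main
begin

end

theory Submission
  imports Defs
begin

lemma ln2_gt_half: "ln (2::real) > 1/2"
proof -
  have e: "exp (1/2::real) * exp (1/2) = exp 1" by (simp flip: exp_add)
  have h: "exp (1/2::real) * exp (1/2) \<le> 3" using e exp_le by simp
  have "exp (1/2::real) < 2"
  proof (rule ccontr)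
    assume "\<not> exp (1/2::real) < 2"
    hence "2 * 2 \<le> exp (1/2::real) * exp (1/2)" by (intro mult_mono) auto
    thus False using h by simp
  qed
  hence "ln (exp (1/2::real)) < ln 2" by (subst ln_less_cancel_iff) auto
  thus ?thesis by simp
qed

theorem lemma2p1:
  fixes n C1 C2 M :: real
  assumes "n > 0" and "C1 > 0" and "C2 > 1"
  shows "\<exists>C3 > 0. \<forall>f :: real \<Rightarrow> real.
           (mono_on {0..} f \<and> (\<forall>r\<ge>0. f r \<ge> 0)
            \<and> (\<forall>r\<ge>C2. f r \<le> C1 * r powr n * f (r / 2))
            \<and> f C2 = M)
           \<longrightarrow> (\<forall>r\<ge>C2. f r \<le> C3 * exp (2 * n * (ln r)^2))"
proof -
  define L :: real where "L = ln 2"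
  have L: "L > 1/2" using ln2_gt_half L_def by simp
  define \<beta> where "\<beta> = (\<bar>ln C1\<bar> + n * L^2) / L"
  define \<gamma> where "\<gamma> = ln (C1 * (2*C2) powr n * \<bar>M\<bar> + 1)"
  define E where "E = (\<lambda>x. n * x^2 + \<beta> * x + \<gamma>)"
  have \<beta>0: "\<beta> \<ge> 0" using L assms unfolding \<beta>_def by simp
  have \<beta>L: "\<beta> * L = \<bar>ln C1\<bar> + n * L^2" using L unfolding \<beta>_def by simp
  have pos: "C1 * (2*C2) powr n * \<bar>M\<bar> + 1 > 0" using assms by (intro add_nonneg_pos mult_nonneg_nonneg) auto
  have expg: "exp \<gamma> = C1 * (2*C2) powr n * \<bar>M\<bar> + 1" unfolding \<gamma>_def using pos by simp
  have Emono: "exp \<gamma> \<le> exp (E x)" if "x \<ge> 0" for x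
    using that \<beta>0 assms unfolding E_def by simp
  define C3 where "C3 = exp (\<gamma> + \<beta>^2/(4*n))"
  have fin: "exp (E x) \<le> C3 * exp (2 * n * x^2)" for x
  proof -
    have "0 \<le> (2*n*x - \<beta>)^2" by simp
    hence "\<beta> * x \<le> n * x^2 + \<beta>^2/(4*n)" using assms(1)
      by (simp add: power2_eq_square field_simps)
    hence "E x \<le> (\<gamma> + \<beta>^2/(4*n)) + 2*n*x^2" unfolding E_def by simp
    thus ?thesis unfolding C3_def by (simp flip: exp_add)
  qed
  show ?thesis
  proof (intro exI[of _ C3] conjI allI impI)
    show "C3 > 0" unfolding C3_def by simp
    fix f :: "real \<Rightarrow> real"
    assume H: "mono_on {0..} f \<and> (\<forall>r\<ge>0. f r \<ge> 0)
            \<and> (\<forall>r\<ge>C2. f r \<le> C1 * r powr n * f (r / 2)) \<and> f C2 = M"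
    hence mono: "mono_on {0..} f" and nn: "\<And>r. r \<ge> 0 \<Longrightarrow> f r \<ge> 0"
      and rec: "\<And>r. r \<ge> C2 \<Longrightarrow> f r \<le> C1 * r powr n * f (r / 2)" and fM: "f C2 = M"
      by auto
    have direct: "f r \<le> exp (E (ln r))" if r: "r \<ge> C2" "r/2 < C2" for r
    proof -
      have r0: "r > 0" using r assms by simp
      have "f (r/2) \<le> f C2" by (rule mono_onD[OF mono]) (use r r0 in auto)
      hence fr2: "f (r/2) \<le> \<bar>M\<bar>" using fM by simp
      have "r powr n \<le> (2*C2) powr n" using r r0 assms by (intro powr_mono2) auto
      have "f r \<le> C1 * r powr n * f (r / 2)" using rec r by simp
      also have "\<dots> \<le> C1 * r powr n * \<bar>M\<bar>"
        using fr2 assms r0 by (intro mult_left_mono) auto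
      also have "\<dots> \<le> C1 * (2*C2) powr n * \<bar>M\<bar>"
        using \<open>r powr n \<le> (2*C2) powr n\<close> assms by (intro mult_right_mono mult_left_mono) auto
      also have "\<dots> \<le> exp \<gamma>" using expg by simp
      also have "\<dots> \<le> exp (E (ln r))" using r assms by (intro Emono) simp
      finally show ?thesis .
    qed
    have step: "C1 * r powr n * exp (E (ln r - L)) \<le> exp (E (ln r))" if r: "r \<ge> 1" for r
    proof -
      define x where "x = ln r"
      have x0: "x \<ge> 0" using r unfolding x_def by simp
      have rp: "r powr n = exp (n * x)" using r unfolding x_def powr_def by (simp add: mult.commute)
      have "ln C1 + n * x + E (x - L) \<le> E x"
      proof -
        have "E x - E (x - L) = n * (2*x*L - L^2) + \<beta> * L"
          unfolding E_def by (simp add: power2_eq_square algebra_simps)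
        also have "\<dots> = 2*n*L*x + \<bar>ln C1\<bar>" using \<beta>L by (simp add: algebra_simps)
        finally have eq: "E x - E (x - L) = 2*n*L*x + \<bar>ln C1\<bar>" .
        have "(n * x) * 1 \<le> (n * x) * (2*L)" using L x0 assms(1)
          by (intro mult_left_mono) auto
        hence "n * x \<le> 2*n*L*x" by (simp add: algebra_simps)
        thus ?thesis using eq by linarith
      qed
      hence "exp (ln C1 + n * x + E (x - L)) \<le> exp (E x)" by simp
      thus ?thesis using rp assms(2) unfolding x_def by (simp add: exp_add)
    qed
    have claim: "\<forall>r. C2 \<le> r \<longrightarrow> r \<le> C2 * 2^k \<longrightarrow> f r \<le> exp (E (ln r))" for k
    proof (induction k)
      case 0
      then show ?case using direct assms by auto
    next
      case (Suc k)
      show ?case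
      proof (intro allI impI)
        fix r assume r: "C2 \<le> r" "r \<le> C2 * 2 ^ Suc k"
        show "f r \<le> exp (E (ln r))"
        proof (cases "r/2 < C2")
          case True thus ?thesis using direct r by simp
        next
          case False
          hence ih: "f (r/2) \<le> exp (E (ln (r/2)))" using Suc.IH r by auto
          have r0: "r > 0" using r assms by simp
          have lr: "ln (r/2) = ln r - L" using r0 unfolding L_def by (simp add: ln_div)
          have "f r \<le> C1 * r powr n * f (r / 2)" using rec r by simp
          also have "\<dots> \<le> C1 * r powr n * exp (E (ln r - L))"
            using ih lr assms r0 by (intro mult_left_mono) auto
          also have "\<dots> \<le> exp (E (ln r))" using step r assms by simp
          finally show ?thesis .
        qed
      qed
    qed
    fix r assume r: "r \<ge> C2"
    obtain k where "r / C2 < 2^k" using real_arch_pow[of 2 "r/C2"] by auto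
    hence "r \<le> C2 * 2^k" using assms by (simp add: field_simps)
    hence "f r \<le> exp (E (ln r))" using claim r by blast
    also have "\<dots> \<le> C3 * exp (2 * n * (ln r)^2)" by (rule fin)
    finally show "f r \<le> C3 * exp (2 * n * (ln r)^2)" .
  qed
qed

end
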